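(* Let $N,N_1,N_2$ be distribution functions such that $N=(N_1+N_2)/2$ and $\mathbf{u}(N_1),\mathbf{u}(N_2)<\infty$. Put ${\scriptstyle\Delta}N=N_1-N$ and $${\scriptstyle\Delta}\mathbf{u}=\int_0^\infty{\scriptstyle\Delta}N(t)\,dt,\qquad \mathbf{u}_{\scriptstyle\Delta}=\int_0^\infty|{\scriptstyle\Delta}N(t)|\,dt,\qquad \mathbf{u}=\mathbf{u}(N).$$ Then $$\mathbf{u}^*(N)-\frac{\mathbf{u}^*(N_1)+\mathbf{u}^*(N_2)}{2}\ge\frac12\cdot\frac{(\mathbf{u}_{\scriptstyle\Delta})^2}{\mathbf{u}}\ge\frac12\cdot\frac{({\scriptstyle\Delta}\mathbf{u})^2}{\mathbf{u}}$$ (whenever $\mathbf{u}>0$, so that the right-hand sides are defined).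
   Context: A distribution function is a nonincreasing function $N:[0,\infty)\to[0,1]$. For such $N$ we set $$\mathbf{u}(N)=\int_0^\infty N(t)\,dt,\qquad \mathbf{u}^*(N)=\int_0^\infty\psi_0(N(t))\,dt,\qquad \psi_0(s)=s\ln(e/s).$$ *)

theory Defs
  imports "HOL-Analysis.Analysis"
begin

text \<open>A distribution function: nonincreasing on [0,oo) with values in [0,1].
  Functions are total on real; only their values on [0,oo) matter.\<close>
definition distribution_function :: "(real \<Rightarrow> real) \<Rightarrow> bool" where
  "distribution_function N \<longleftrightarrow>
     (\<forall>s t. 0 \<le> s \<longrightarrow> s \<le> t \<longrightarrow> N t \<le> N s) \<and> (\<forall>t\<ge>0. 0 \<le> N t \<and> N t \<le> 1)"

text \<open>psi_0(s) = s ln(e/s), with psi_0(0) = 0 (continuous extension).\<close>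
definition psi0 :: "real \<Rightarrow> real" where
  "psi0 s = (if s = 0 then 0 else s * ln (exp 1 / s))"

definition u :: "(real \<Rightarrow> real) \<Rightarrow> ennreal" where
  "u N = (\<integral>\<^sup>+ t. ennreal (N t) * indicator {0..} t \<partial>lborel)"

definition ustar :: "(real \<Rightarrow> real) \<Rightarrow> ennreal" where
  "ustar N = (\<integral>\<^sup>+ t. ennreal (psi0 (N t)) * indicator {0..} t \<partial>lborel)"

end

theory Submission
  imports Defs
begin

lemma psi0_pos: "s > 0 \<Longrightarrow> psi0 s = s - s * ln s"
  by (simp add: psi0_def ln_div algebra_simps)

lemma k_mono:
  fixes x :: real assumes "0 \<le> x" "x < 1"
  shows "ln (1+x) - ln (1-x) - 2*x \<ge> 0"
proof -
  have "(\<lambda>x. ln (1+x) - ln (1-x) - 2*x) 0 \<le> (\<lambda>x. ln (1+x) - ln (1-x) - 2*x) x"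
  proof (rule DERIV_nonneg_imp_nondecreasing[OF assms(1)])
    fix y :: real assume y: "0 \<le> y" "y \<le> x"
    have "DERIV (\<lambda>x. ln (1+x) - ln (1-x) - 2*x) y :> (1/(1+y) - (-1)/(1-y) - 2)"
      using y assms by (auto intro!: derivative_eq_intros)
    moreover have "1/(1+y) - (-1)/(1-y) - 2 \<ge> 0"
    proof -
      have "1/(1+y) - (-1)/(1-y) - 2 = 2*y^2/((1+y)*(1-y))"
      proof -
        have "y*y < 1" using y assms using mult_right_mono[of y 1 y] by simp
        then show ?thesis using y assms by (simp add: field_simps power2_eq_square)
      qed
      also have "\<dots> \<ge> 0" using y assms by (intro divide_nonneg_pos) auto
      finally show ?thesis .
    qed
    ultimately show "\<exists>d. DERIV (\<lambda>x. ln (1+x) - ln (1-x) - 2*x) y :> d \<and> d \<ge> 0" by blast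
  qed
  then show ?thesis by simp
qed

lemma h_nonneg:
  fixes x :: real assumes "0 \<le> x" "x < 1"
  shows "(1+x) * ln (1+x) + (1-x) * ln (1-x) - x^2 \<ge> 0"
proof -
  let ?h = "\<lambda>x::real. (1+x) * ln (1+x) + (1-x) * ln (1-x) - x^2"
  have "?h 0 \<le> ?h x"
  proof (rule DERIV_nonneg_imp_nondecreasing[OF assms(1)])
    fix y :: real assume y: "0 \<le> y" "y \<le> x"
    have "DERIV ?h y :> (1 * ln (1+y) + (1+y) * (1/(1+y)) + ((-1) * ln (1-y) + (1-y) * ((-1)/(1-y))) - 2*y)"
      using y assms by (auto intro!: derivative_eq_intros)
    moreover have "(1 * ln (1+y) + (1+y) * (1/(1+y)) + ((-1) * ln (1-y) + (1-y) * ((-1)/(1-y))) - 2*y)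
       = ln (1+y) - ln (1-y) - 2*y" using y assms by (simp add: field_simps)
    moreover have "ln (1+y) - ln (1-y) - 2*y \<ge> 0" using k_mono[of y] y assms by auto
    ultimately show "\<exists>d. DERIV ?h y :> d \<and> d \<ge> 0" by auto
  qed
  then show ?thesis by simp
qed

lemma ln2_ge: "ln (2::real) \<ge> 1/2"
proof -
  have "ln (1/2::real) \<le> 1/2 - 1" by (rule ln_le_minus_one) auto
  then show ?thesis by (simp add: ln_div)
qed

lemma psi_key_wlog:
  fixes a b :: real
  assumes "0 \<le> b" "b \<le> a" "a \<le> 1" "0 < a"
  shows "psi0 ((a+b)/2) \<ge> (psi0 a + psi0 b)/2 + (a - (a+b)/2)^2 / (2*((a+b)/2))"
proof (cases "b = 0")
  case True
  have e1: "psi0 ((a+b)/2) = a/2 - a/2 * (ln a - ln 2)" using assms True by (simp add: psi0_pos ln_div)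
  have e2: "psi0 a = a - a * ln a" using assms by (simp add: psi0_pos)
  have e3: "psi0 b = 0" using True by (simp add: psi0_def)
  have e4: "(a - (a+b)/2)^2 / (2*((a+b)/2)) = a/4" using True assms by (simp add: field_simps power2_eq_square)
  have e5: "a/2 * ln 2 \<ge> a/2 * (1/2)" using ln2_ge assms by (intro mult_left_mono) auto
  show ?thesis unfolding e1 e2 e3 e4 using e5 by (simp add: field_simps)
next
  case False
  define m where "m = (a+b)/2"
  define x where "x = (a-b)/(a+b)"
  have m: "m > 0" using assms False by (simp add: m_def)
  have x: "0 \<le> x" "x < 1" using assms False by (auto simp: x_def field_simps)
  have a: "a = m*(1+x)" and b: "b = m*(1-x)" using m by (auto simp: m_def x_def field_simps)
  have lna: "ln a = ln m + ln (1+x)" using a m x by (simp add: ln_mult)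
  have lnb: "ln b = ln m + ln (1-x)" using b m x by (simp add: ln_mult)
  have pa: "psi0 a = a - a * ln a" using assms by (simp add: psi0_pos)
  have pb: "psi0 b = b - b * ln b" using assms False by (simp add: psi0_pos)
  have pm: "psi0 m = m - m * ln m" using m by (simp add: psi0_pos)
  have H: "(1+x) * ln (1+x) + (1-x) * ln (1-x) - x^2 \<ge> 0" by (rule h_nonneg[OF x])
  have "psi0 m - (psi0 a + psi0 b)/2 = m/2 * ((1+x) * ln (1+x) + (1-x) * ln (1-x))"
    unfolding pa pb pm lna lnb unfolding a b by (simp add: field_simps)
  also have "\<dots> \<ge> m/2 * x^2" using H m by (intro mult_left_mono) auto
  finally have "psi0 m - (psi0 a + psi0 b)/2 \<ge> m/2 * x^2" .
  moreover have "(a - m)^2 / (2*m) = m/2 * x^2" using m by (simp add: a field_simps power2_eq_square)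
  ultimately show ?thesis unfolding m_def[symmetric] by linarith
qed


lemma psi0_nonneg: "0 \<le> s \<Longrightarrow> s \<le> 1 \<Longrightarrow> psi0 s \<ge> 0"
proof (cases "s = 0")
  case False
  assume "0 \<le> s" "s \<le> 1"
  then have "s > 0" "ln s \<le> 0" using False by auto
  then have "s * ln s \<le> 0" by (intro mult_nonneg_nonpos) auto
  moreover have "psi0 s = s - s * ln s" using \<open>s > 0\<close> by (simp add: psi0_pos)
  ultimately show ?thesis using \<open>s > 0\<close> by linarith
qed (simp add: psi0_def)

definition W :: "real \<Rightarrow> real \<Rightarrow> real" where
  "W a m = (if m = 0 then 0 else (a - m)^2 / (2*m))"

lemma psi_key:
  fixes a b :: real
  assumes "0 \<le> a" "a \<le> 1" "0 \<le> b" "b \<le> 1"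
  shows "psi0 ((a+b)/2) \<ge> (psi0 a + psi0 b)/2 + W a ((a+b)/2)"
proof (cases "a + b = 0")
  case True
  then have "a = 0" "b = 0" using assms by auto
  then show ?thesis by (simp add: W_def psi0_def)
next
  case False
  show ?thesis
  proof (cases "b \<le> a")
    case True
    then have "a > 0" using False assms by auto
    then show ?thesis using psi_key_wlog[of b a] True assms False by (simp add: W_def)
  next
    case c: False
    then have "b > 0" using assms by auto
    moreover have "(a - (a+b)/2)^2 = (b - (b+a)/2)^2" by (simp add: power2_eq_square algebra_simps)
    ultimately show ?thesis using psi_key_wlog[of a b] c assms False by (simp add: W_def add.commute)
  qed
qed

lemma W_nonneg: "0 \<le> m \<Longrightarrow> W a m \<ge> 0"
  by (simp add: W_def)

lemma psi0_meas[measurable]: "psi0 \<in> borel_measurable borel"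
  unfolding psi0_def[abs_def] by measurable

lemma W_meas[measurable]: "(\<lambda>x. W (f x) (g x)) \<in> borel_measurable M"
  if [measurable]: "f \<in> borel_measurable M" "g \<in> borel_measurable M"
  unfolding W_def by measurable

lemma df_meas:
  assumes "distribution_function X"
  shows "(\<lambda>t. X t * indicator {0..} t) \<in> borel_measurable borel"
proof -
  have "mono (\<lambda>t. - X (max t 0))"
    using assms unfolding distribution_function_def mono_def by (auto simp: max_def)
  then have "(\<lambda>t. - X (max t 0)) \<in> borel_measurable borel" by (rule borel_measurable_mono)
  then have "(\<lambda>t. - (- X (max t 0)) * indicator {0..} t) \<in> borel_measurable borel" by measurable
  moreover have "(\<lambda>t. - (- X (max t 0)) * indicator {0..} t) = (\<lambda>t. X t * indicator {0..} t)"
    by (auto simp: indicator_def max_def)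
  ultimately show ?thesis by simp
qed


lemma ennreal_ind: "ennreal (x) * indicator S t = ennreal (x * indicator S t)"
  by (auto simp: indicator_def)

theorem corollary5p2:
  fixes N N1 N2 :: "real \<Rightarrow> real"
  assumes "distribution_function N" "distribution_function N1" "distribution_function N2"
    and "\<And>t. t \<ge> 0 \<Longrightarrow> N t = (N1 t + N2 t) / 2"
    and "u N1 < \<infinity>" "u N2 < \<infinity>"
    and "enn2real (u N) > 0"
  shows
    "ustar N \<ge> (ustar N1 + ustar N2) / 2
        + ennreal ((1/2) * (LINT t:{0..}|lborel. \<bar>N1 t - N t\<bar>)\<^sup>2 / enn2real (u N))
     \<and> (1/2) * (LINT t:{0..}|lborel. \<bar>N1 t - N t\<bar>)\<^sup>2 / enn2real (u N)
        \<ge> (1/2) * (LINT t:{0..}|lborel. N1 t - N t)\<^sup>2 / enn2real (u N)"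
proof -
  define S :: "real set" where "S = {0..}"
  define F where "F t = N t * indicator S t" for t
  define F1 where "F1 t = N1 t * indicator S t" for t
  define F2 where "F2 t = N2 t * indicator S t" for t
  define D where "D t = F1 t - F t" for t
  define U where "U = enn2real (u N)"
  have eqF: "F = (\<lambda>t. N t * indicator S t)" by (simp add: F_def fun_eq_iff)
  have eqF1: "F1 = (\<lambda>t. N1 t * indicator S t)" by (simp add: F1_def fun_eq_iff)
  have eqF2: "F2 = (\<lambda>t. N2 t * indicator S t)" by (simp add: F2_def fun_eq_iff)
  have [measurable]: "F \<in> borel_measurable borel" "F1 \<in> borel_measurable borel" "F2 \<in> borel_measurable borel"
    using df_meas[OF assms(1)] df_meas[OF assms(2)] df_meas[OF assms(3)]
    by (simp_all add: eqF eqF1 eqF2 S_def)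
  have [measurable]: "D \<in> borel_measurable borel" unfolding D_def[abs_def] by measurable
  have rng: "0 \<le> X t \<and> X t \<le> 1" if "distribution_function Y" "X = (\<lambda>t. Y t * indicator S t)" for X Y t
    using that unfolding distribution_function_def by (auto simp: indicator_def S_def)
  have F01: "0 \<le> F t" "F t \<le> 1" for t using rng[OF assms(1) eqF] by auto
  have F101: "0 \<le> F1 t" "F1 t \<le> 1" for t using rng[OF assms(2) eqF1] by auto
  have F201: "0 \<le> F2 t" "F2 t \<le> 1" for t using rng[OF assms(3) eqF2] by auto
  have Fmid: "F t = (F1 t + F2 t)/2" for t
    using assms(4)[of t] by (auto simp: F_def F1_def F2_def S_def indicator_def)
  have uX: "u X = (\<integral>\<^sup>+ t. ennreal (Y t) \<partial>lborel)" if "Y = (\<lambda>t. X t * indicator S t)" for X Y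
    unfolding u_def that S_def by (simp add: ennreal_ind)
  have usX: "ustar X = (\<integral>\<^sup>+ t. ennreal (psi0 (Y t)) \<partial>lborel)" if "Y = (\<lambda>t. X t * indicator S t)" for X Y
    unfolding ustar_def that S_def by (intro nn_integral_cong) (auto simp: indicator_def psi0_def)
  have uN: "u N = ennreal U"
    using assms(7) by (cases "u N") (auto simp: U_def)
  have U0: "U > 0" using assms(7) by (simp add: U_def)
  have intg: "integrable lborel Y" if "Y = (\<lambda>t. X t * indicator S t)" "u X < \<infinity>" "\<And>t. 0 \<le> Y t"
    "Y \<in> borel_measurable borel" for X Y
    using that(2-) uX[OF that(1)] by (intro integrableI_nonneg) auto
  have iF: "integrable lborel F" by (rule intg[OF eqF]) (use uN F01 in auto)
  have iF1: "integrable lborel F1" by (rule intg[OF eqF1]) (use assms(5) F101 in auto)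
  have iD: "integrable lborel D" unfolding D_def[abs_def] by (rule Bochner_Integration.integrable_diff[OF iF1 iF])
  have iaD: "integrable lborel (\<lambda>t. \<bar>D t\<bar>)" using iD by simp
  define A where "A = integral\<^sup>L lborel (\<lambda>t. \<bar>D t\<bar>)"
  have A0: "A \<ge> 0" unfolding A_def by simp
  have LA: "(LINT t:{0..}|lborel. \<bar>N1 t - N t\<bar>) = A"
    unfolding A_def set_lebesgue_integral_def
    by (intro Bochner_Integration.integral_cong) (auto simp: D_def F_def F1_def S_def indicator_def)
  have LD: "(LINT t:{0..}|lborel. N1 t - N t) = integral\<^sup>L lborel D"
    unfolding set_lebesgue_integral_def
    by (intro Bochner_Integration.integral_cong) (auto simp: D_def F_def F1_def S_def indicator_def)
  have second: "(1/2) * A^2 / U \<ge> (1/2) * (integral\<^sup>L lborel D)^2 / U"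
  proof -
    have "\<bar>integral\<^sup>L lborel D\<bar> \<le> A" unfolding A_def
      by (rule integral_abs_bound_integral[OF iD iaD]) auto
    then have "(integral\<^sup>L lborel D)^2 \<le> A^2"
      by (metis abs_le_square_iff abs_of_nonneg A0)
    then show ?thesis using U0 by (intro divide_right_mono mult_left_mono) auto
  qed
  define B where "B = (\<integral>\<^sup>+ t. ennreal (W (F1 t) (F t)) \<partial>lborel)"
  have pw: "ennreal (psi0 (F t)) \<ge> ennreal (1/2) * (ennreal (psi0 (F1 t)) + ennreal (psi0 (F2 t)))
      + ennreal (W (F1 t) (F t))" for t
  proof -
    have k: "psi0 (F t) \<ge> (1/2) * (psi0 (F1 t) + psi0 (F2 t)) + W (F1 t) (F t)"
      using psi_key[OF F101 F201, of t t] unfolding Fmid[of t, symmetric] by simp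
    have nn: "psi0 (F1 t) \<ge> 0" "psi0 (F2 t) \<ge> 0" "W (F1 t) (F t) \<ge> 0"
      using psi0_nonneg F101 F201 W_nonneg F01 by auto
    have "ennreal (1/2) * (ennreal (psi0 (F1 t)) + ennreal (psi0 (F2 t))) + ennreal (W (F1 t) (F t))
        = ennreal ((1/2) * (psi0 (F1 t) + psi0 (F2 t)) + W (F1 t) (F t))"
    proof -
      have "ennreal (psi0 (F1 t)) + ennreal (psi0 (F2 t)) = ennreal (psi0 (F1 t) + psi0 (F2 t))"
        using nn by simp
      moreover have "ennreal (1/2) * ennreal (psi0 (F1 t) + psi0 (F2 t)) = ennreal ((1/2) * (psi0 (F1 t) + psi0 (F2 t)))"
        using nn by (intro ennreal_mult[symmetric]) auto
      moreover have "ennreal ((1/2) * (psi0 (F1 t) + psi0 (F2 t))) + ennreal (W (F1 t) (F t)) = ennreal ((1/2) * (psi0 (F1 t) + psi0 (F2 t)) + W (F1 t) (F t))"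
        using nn by (intro ennreal_plus[symmetric]) auto
      ultimately show ?thesis by simp
    qed
    also have "\<dots> \<le> ennreal (psi0 (F t))" using k by (rule ennreal_leI)
    finally show ?thesis .
  qed
  have first1: "ustar N \<ge> ennreal (1/2) * (ustar N1 + ustar N2) + B"
  proof -
    have "ennreal (1/2) * (ustar N1 + ustar N2) + B =
      (\<integral>\<^sup>+ t. ennreal (1/2) * (ennreal (psi0 (F1 t)) + ennreal (psi0 (F2 t)))
      + ennreal (W (F1 t) (F t)) \<partial>lborel)"
      unfolding usX[of F1 N1, OF eqF1] usX[of F2 N2, OF eqF2] B_def
      by (simp add: nn_integral_add nn_integral_cmult)
    also have "\<dots> \<le> ustar N"
      unfolding usX[of F N, OF eqF] by (intro nn_integral_mono pw)
    finally show ?thesis .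
  qed
  have Bge: "B \<ge> ennreal ((1/2) * A^2 / U)"
  proof (cases "A = 0")
    case True then show ?thesis by simp
  next
    case False
    then have Ap: "A > 0" using A0 by simp
    define c where "c = U / A"
    have c0: "c > 0" using Ap U0 by (simp add: c_def)
    have pt: "\<bar>D t\<bar> \<le> c * W (F1 t) (F t) + (1/(2*c)) * F t" for t
    proof (cases "F t = 0")
      case True
      then have "F1 t + F2 t = 0" using Fmid[of t] by simp
      then have "F1 t = 0" using F101(1)[of t] F201(1)[of t] by (simp add: add_nonneg_eq_0_iff)
      then show ?thesis using True by (simp add: D_def W_def)
    next
      case False
      then have Fp: "F t > 0" using F01(1)[of t] by linarith
      have "c * W (F1 t) (F t) + (1/(2*c)) * F t - \<bar>D t\<bar> = (c * \<bar>D t\<bar> - F t)^2 / (2*c*F t)"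
        using Fp c0 by (simp add: W_def D_def field_simps power2_eq_square)
      also have "\<dots> \<ge> 0" using Fp c0 by simp
      finally show ?thesis by simp
    qed
    have "ennreal A = (\<integral>\<^sup>+ t. ennreal \<bar>D t\<bar> \<partial>lborel)"
      unfolding A_def by (rule nn_integral_eq_integral[OF iaD, symmetric]) auto
    also have "\<dots> \<le> (\<integral>\<^sup>+ t. ennreal c * ennreal (W (F1 t) (F t)) + ennreal (1/(2*c)) * ennreal (F t) \<partial>lborel)"
      using pt c0 F01 W_nonneg
      by (intro nn_integral_mono) (simp add: ennreal_mult[symmetric] ennreal_plus[symmetric] del: ennreal_plus)
    also have "\<dots> = ennreal c * B + ennreal (1/(2*c)) * u N"
      unfolding B_def uX[of F N, OF eqF]
      by (simp add: nn_integral_add nn_integral_cmult)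
    also have "\<dots> = ennreal c * B + ennreal (A/2)"
      using c0 U0 Ap by (simp add: uN ennreal_mult[symmetric] c_def field_simps)
    finally have ineq: "ennreal A \<le> ennreal c * B + ennreal (A/2)" .
    show ?thesis
    proof (cases "B = \<infinity>")
      case True then show ?thesis by simp
    next
      case False
      then obtain b where b: "B = ennreal b" "b \<ge> 0" by (cases B) auto
      have "ennreal A \<le> ennreal (c * b + A/2)" using ineq b c0 Ap by (simp add: ennreal_mult)
      then have "A \<le> c * b + A/2" using b c0 Ap by (subst (asm) ennreal_le_iff) (auto intro!: add_nonneg_nonneg)
      then have "A/2 \<le> U / A * b" unfolding c_def by linarith
      then have "(A/2) * (A/U) \<le> (U/A*b) * (A/U)" using Ap U0 by (intro mult_right_mono) auto
      then have "(1/2) * A^2 / U \<le> b" using Ap U0 by (simp add: field_simps power2_eq_square)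
      then show ?thesis using b by simp
    qed
  qed
  have half: "(x::ennreal) / 2 = ennreal (1/2) * x" for x
    by (simp add: divide_ennreal_def ennreal_inverse_eq_top_iff ennreal_divide_times mult.commute) 
  show ?thesis
    unfolding LA LD U_def[symmetric]
  proof
    show "(ustar N1 + ustar N2) / 2 + ennreal (1 / 2 * A\<^sup>2 / U) \<le> ustar N"
      using first1 Bge half by (metis add_left_mono order.trans)
    show "(1/2) * A^2 / U \<ge> (1/2) * (integral\<^sup>L lborel D)^2 / U" by (rule second)
  qed
qed

end
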